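(* Let $g:(0,\infty)\to(0,\infty)$ be three times continuously differentiable with $g(t)=t\,g(1/t)$ for all $t>0$, let $\mu$ be a symmetric probability density on $\mathbb{R}$ with $\int_{\mathbb{R}}g^{(j)}(e^{sw})\mu(w)dw<\infty$ for all $s>0$ and $j\in\{0,1,2,3\}$, and let $f$ be a smooth positive probability density on $\mathbb{R}$ with $\phi=\log f$. Then for all $x_i,u_i\in\mathbb{R}$, $\log\Big(\frac{f(x_i+\sigma u_i)}{f(x_i)}\frac{g(e^{-\phi'(x_i+\sigma u_i)\sigma u_i})}{g(e^{\phi'(x_i)\sigma u_i})}\Big)=\mathcal{O}(\sigma^3)$ as $\sigma\to0$.
   Context: $g^{(j)}$ is the $j$-th derivative of $g$. *)

theory Defs
  imports "HOL-Analysis.Analysis" "HOL-Library.Landau_Symbols"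
begin

definition C3_on_pos :: "(real \<Rightarrow> real) \<Rightarrow> bool" where
  "C3_on_pos g \<longleftrightarrow>
     (\<forall>j<3. \<forall>t>0. (((deriv ^^ j) g) has_real_derivative ((deriv ^^ Suc j) g t)) (at t))
     \<and> continuous_on {0<..} ((deriv ^^ 3) g)"

definition smooth_real :: "(real \<Rightarrow> real) \<Rightarrow> bool" where
  "smooth_real f \<longleftrightarrow>
     (\<forall>n. \<forall>x. (((deriv ^^ n) f) has_real_derivative ((deriv ^^ Suc n) f x)) (at x))"

definition prob_density :: "(real \<Rightarrow> real) \<Rightarrow> bool" where
  "prob_density p \<longleftrightarrow> (\<forall>x. p x \<ge> 0) \<and> integrable lborel p \<and> integral\<^sup>L lborel p = 1"

end

theory Submission
  imports Defs
begin

lemma mvt_bound: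
  fixes F F' :: "real \<Rightarrow> real"
  assumes d: "\<And>t. t \<in> closed_segment a b \<Longrightarrow> (F has_real_derivative F' t) (at t)"
    and bd: "\<And>t. t \<in> closed_segment a b \<Longrightarrow> \<bar>F' t\<bar> \<le> B"
  shows "\<bar>F b - F a\<bar> \<le> B * \<bar>b - a\<bar>"
proof -
  consider "a < b" | "a = b" | "b < a" by linarith
  then show ?thesis
  proof cases
    case 1
    then obtain z where z: "a < z" "z < b" "F b - F a = (b - a) * F' z"
      using MVT2[of a b F F'] d by (auto simp: closed_segment_eq_real_ivl)
    have "\<bar>F' z\<bar> \<le> B" using bd z by (auto simp: closed_segment_eq_real_ivl)
    then show ?thesis using z 1 by (simp add: abs_mult mult.commute mult_right_mono)
  next
    case 2 then show ?thesis by simp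
  next
    case 3
    then obtain z where z: "b < z" "z < a" "F a - F b = (a - b) * F' z"
      using MVT2[of b a F F'] d by (auto simp: closed_segment_eq_real_ivl)
    have "\<bar>F' z\<bar> \<le> B" using bd z by (auto simp: closed_segment_eq_real_ivl)
    then show ?thesis using z 3 by (simp add: abs_mult mult.commute mult_right_mono abs_minus_commute)
  qed
qed

lemma seg_abs: fixes a b s :: real assumes "s \<in> closed_segment a b" shows "\<bar>s\<bar> \<le> max \<bar>a\<bar> \<bar>b\<bar>"
  using assms by (auto simp: closed_segment_eq_real_ivl split: if_splits)


lemma main:
  fixes g f :: "real \<Rightarrow> real"
  assumes g_C3: "C3_on_pos g"
    and g_pos: "\<forall>t>0. g t > 0"
    and g_sym: "\<forall>t>0. g t = t * g (1 / t)"
    and f_smooth: "smooth_real f"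
    and f_pos: "\<forall>x. f x > 0"
  shows "(\<lambda>\<sigma>. ln ((f (x + \<sigma> * u) / f x) *
              (g (exp (- deriv (\<lambda>y. ln (f y)) (x + \<sigma> * u) * \<sigma> * u))
               / g (exp (deriv (\<lambda>y. ln (f y)) x * \<sigma> * u)))))
            \<in> O[at 0](\<lambda>\<sigma>. \<sigma> ^ 3)"
proof -
  define f1 where "f1 = (deriv^^1) f"
  define f2 where "f2 = (deriv^^2) f"
  define f3 where "f3 = (deriv^^3) f"
  have df: "\<And>n y. ((deriv^^n) f has_real_derivative (deriv^^Suc n) f y) (at y)"
    using f_smooth unfolding smooth_real_def by blast
  have df0: "\<And>y. (f has_real_derivative f1 y) (at y)" using df[of 0] by (simp add: f1_def)
  have df1: "\<And>y. (f1 has_real_derivative f2 y) (at y)" using df[of 1] by (simp add: f1_def f2_def numeral_2_eq_2)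
  have df2: "\<And>y. (f2 has_real_derivative f3 y) (at y)" using df[of 2] by (simp add: f3_def f2_def)
  have df3: "\<And>y. (f3 has_real_derivative (deriv^^4) f y) (at y)" using df[of 3] by (simp add: f3_def)
  have cf: "isCont f y" "isCont f1 y" "isCont f2 y" "isCont f3 y" for y
    by (rule DERIV_isCont[OF df0], rule DERIV_isCont[OF df1], rule DERIV_isCont[OF df2], rule DERIV_isCont[OF df3])
  have fnz: "f y \<noteq> 0" for y using f_pos by (metis less_irrefl)
  define D where "D y = f1 y / f y" for y
  define D1 where "D1 y = f2 y / f y - (D y)^2" for y
  define D2 where "D2 y = (f3 y * f y - f2 y * f1 y) / (f y)^2 - 2 * D y * D1 y" for y
  have dphi: "((\<lambda>y. ln (f y)) has_real_derivative D y) (at y)" for y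
    unfolding D_def using f_pos df0
    by (auto intro!: derivative_eq_intros simp: field_simps)
  have Deq: "deriv (\<lambda>y. ln (f y)) = D"
    using dphi DERIV_imp_deriv by blast
  have dD: "(D has_real_derivative D1 y) (at y)" for y
    unfolding D_def D1_def using fnz df0 df1
    by (auto intro!: derivative_eq_intros simp: field_simps power2_eq_square)
  have dD1: "(D1 has_real_derivative D2 y) (at y)" for y
    unfolding D_def D1_def D2_def using fnz df0 df1 df2
    by (auto intro!: derivative_eq_intros simp: field_simps power2_eq_square)
  have cD: "continuous_on UNIV D" "continuous_on UNIV D1"
    using dD dD1 by (auto intro!: continuous_at_imp_continuous_on DERIV_isCont)
  have cD2: "continuous_on UNIV D2"
    unfolding D2_def using fnz cf cD
    by (auto intro!: continuous_at_imp_continuous_on continuous_intros simp: continuous_on_eq_continuous_at)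
  define g1 where "g1 = (deriv^^1) g"
  define g2 where "g2 = (deriv^^2) g"
  have dg: "\<And>j t. j < 3 \<Longrightarrow> t > 0 \<Longrightarrow> ((deriv^^j) g has_real_derivative (deriv^^Suc j) g t) (at t)"
    using g_C3 unfolding C3_on_pos_def by blast
  have dg0: "\<And>t. t > 0 \<Longrightarrow> (g has_real_derivative g1 t) (at t)" using dg[of 0] by (simp add: g1_def)
  have dg1: "\<And>t. t > 0 \<Longrightarrow> (g1 has_real_derivative g2 t) (at t)" using dg[of 1] by (simp add: g1_def g2_def numeral_2_eq_2)
  have dg2: "\<And>t. t > 0 \<Longrightarrow> (g2 has_real_derivative (deriv^^3) g t) (at t)" using dg[of 2] by (simp add: g2_def)
  have cg: "isCont g (exp s)" "isCont g1 (exp s)" "isCont g2 (exp s)" for s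
    by (rule DERIV_isCont[OF dg0], simp, rule DERIV_isCont[OF dg1], simp, rule DERIV_isCont[OF dg2], simp)
  have gnz: "g (exp s) \<noteq> 0" for s using g_pos by (metis exp_gt_zero less_irrefl)
  define h where "h s = ln (g (exp s))" for s
  define H1 where "H1 s = g1 (exp s) * exp s / g (exp s)" for s
  define H2 where "H2 s = ((g2 (exp s) * exp s * exp s + exp s * g1 (exp s)) * g (exp s)
      - g1 (exp s) * exp s * (g1 (exp s) * exp s)) / (g (exp s) * g (exp s))" for s
  have gexp: "((\<lambda>s. g (exp s)) has_real_derivative g1 (exp s) * exp s) (at s)" for s
    by (rule DERIV_chain2[OF dg0]) (auto intro: DERIV_exp)
  have g1exp: "((\<lambda>s. g1 (exp s)) has_real_derivative g2 (exp s) * exp s) (at s)" for s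
    by (rule DERIV_chain2[OF dg1]) (auto intro: DERIV_exp)
  have dh: "(h has_real_derivative H1 s) (at s)" for s
    unfolding h_def H1_def using g_pos
    by (auto intro!: derivative_eq_intros gexp simp: field_simps)
  have dH1: "(H1 has_real_derivative H2 s) (at s)" for s
    unfolding H1_def[abs_def] H2_def
    by (rule DERIV_divide[OF DERIV_mult[OF g1exp DERIV_exp] gexp gnz])
  have cH2: "continuous_on UNIV H2"
  proof (rule continuous_at_imp_continuous_on, rule ballI)
    fix s :: real
    have c: "isCont (\<lambda>s. g (exp s)) s" "isCont (\<lambda>s. g1 (exp s)) s" "isCont (\<lambda>s. g2 (exp s)) s"
      using isCont_o2[OF isCont_exp cg(1)] isCont_o2[OF isCont_exp cg(2)] isCont_o2[OF isCont_exp cg(3)]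
      by auto
    show "isCont H2 s" unfolding H2_def[abs_def]
      using c gnz[of s] by - (rule continuous_intros | assumption | simp)+
  qed
  have hsym: "h s = s + h (- s)" for s
  proof -
    have "g (exp s) = exp s * g (1 / exp s)" using g_sym exp_gt_zero[of s] by blast
    moreover have "1 / exp s = exp (- s)" by (simp add: exp_minus divide_inverse)
    ultimately have "g (exp s) = exp s * g (exp (- s))" by simp
    moreover have "g (exp (- s)) > 0" using g_pos by simp
    ultimately show ?thesis unfolding h_def by (simp add: ln_mult)
  qed
  have H10: "H1 0 = 1/2"
  proof -
    have "((\<lambda>s. h (- s)) has_real_derivative H1 (- 0) * (- 1)) (at 0)"
      by (rule DERIV_chain2[OF dh DERIV_minus[OF DERIV_ident]])
    then have "((\<lambda>s. s + h (- s)) has_real_derivative 1 + H1 (- 0) * (- 1)) (at 0)"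
      by (rule DERIV_add[OF DERIV_ident])
    moreover have "(\<lambda>s. s + h (- s)) = h"
    proof (rule ext)
      fix s show "s + h (- s) = h s" using hsym[of s] by linarith
    qed
    ultimately have "(h has_real_derivative 1 + H1 (- 0) * (- 1)) (at 0)" by simp
    then have "H1 0 = 1 - H1 0" using dh[of 0] DERIV_unique by fastforce
    then show ?thesis by simp
  qed
  define I where "I = {x - 1..x + 1}"
  have cI: "compact I" unfolding I_def by simp
  obtain M1 where M1: "M1 \<ge> 0" "\<And>y. y \<in> I \<Longrightarrow> \<bar>D2 y\<bar> \<le> M1"
    using continuous_on_compact_bound[OF cI continuous_on_subset[OF cD2]] by auto
  obtain M2 where M2: "M2 \<ge> 0" "\<And>y. y \<in> I \<Longrightarrow> \<bar>D1 y\<bar> \<le> M2"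
    using continuous_on_compact_bound[OF cI continuous_on_subset[OF cD(2)]] by auto
  obtain M3 where M3: "M3 \<ge> 0" "\<And>y. y \<in> I \<Longrightarrow> \<bar>D y\<bar> \<le> M3"
    using continuous_on_compact_bound[OF cI continuous_on_subset[OF cD(1)]] by auto
  obtain M4 where M4: "M4 \<ge> 0" "\<And>y. y \<in> {-1..1} \<Longrightarrow> \<bar>H2 y\<bar> \<le> M4"
    using continuous_on_compact_bound[OF compact_Icc continuous_on_subset[OF cH2]] by auto
  have inI: "\<bar>t\<bar> \<le> 1 \<Longrightarrow> x + t \<in> I" for t unfolding I_def by auto
  have sD: "((\<lambda>s. D (x + s)) has_real_derivative D1 (x + s)) (at s)" for s
    using DERIV_chain2[OF dD DERIV_add[OF DERIV_const[of x] DERIV_ident]] by simp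
  have sD1: "((\<lambda>s. D1 (x + s)) has_real_derivative D2 (x + s)) (at s)" for s
    using DERIV_chain2[OF dD1 DERIV_add[OF DERIV_const[of x] DERIV_ident]] by simp
  have sphi: "((\<lambda>s. ln (f (x + s))) has_real_derivative D (x + s)) (at s)" for s
    using DERIV_chain2[OF dphi DERIV_add[OF DERIV_const[of x] DERIV_ident]] by simp
  have clS: "\<bar>D (x + t) - D x - t * D1 (x + t)\<bar> \<le> M1 * t^2" if "\<bar>t\<bar> \<le> 1" for t
  proof -
    have "\<bar>(D (x + t) - D x - t * D1 (x + t)) - (D (x + 0) - D x - 0 * D1 (x + 0))\<bar> \<le> (M1 * \<bar>t\<bar>) * \<bar>t - 0\<bar>"
    proof (rule mvt_bound[where F="\<lambda>s. D (x + s) - D x - s * D1 (x + s)" and F'="\<lambda>s. - (s * D2 (x + s))"])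
      fix s assume "s \<in> closed_segment 0 t"
      show "((\<lambda>s. D (x + s) - D x - s * D1 (x + s)) has_real_derivative - (s * D2 (x + s))) (at s)"
        by (auto intro!: derivative_eq_intros sD sD1)
      have "\<bar>s\<bar> \<le> \<bar>t\<bar>" using seg_abs[OF \<open>s \<in> _\<close>] by simp
      then have "\<bar>D2 (x + s)\<bar> \<le> M1" using M1 inI that by auto
      then show "\<bar>- (s * D2 (x + s))\<bar> \<le> M1 * \<bar>t\<bar>"
        using \<open>\<bar>s\<bar> \<le> \<bar>t\<bar>\<close> M1(1) mult_mono[of "\<bar>s\<bar>" "\<bar>t\<bar>" "\<bar>D2 (x + s)\<bar>" M1]
        by (simp add: abs_mult mult.commute)
    qed
    then show ?thesis by (simp add: power2_eq_square abs_mult)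
  qed
  have clT: "\<bar>ln (f (x + t)) - ln (f x) - t * (D (x + t) + D x) / 2\<bar> \<le> M1 / 2 * \<bar>t\<bar>^3" if "\<bar>t\<bar> \<le> 1" for t
  proof -
    have "\<bar>(ln (f (x + t)) - ln (f x) - t * (D (x + t) + D x) / 2) - (ln (f (x + 0)) - ln (f x) - 0 * (D (x + 0) + D x) / 2)\<bar> \<le> (M1 * t^2 / 2) * \<bar>t - 0\<bar>"
    proof (rule mvt_bound[where F="\<lambda>s. ln (f (x + s)) - ln (f x) - s * (D (x + s) + D x) / 2" and F'="\<lambda>s. (D (x + s) - D x - s * D1 (x + s)) / 2"])
      fix s assume "s \<in> closed_segment 0 t"
      show "((\<lambda>s. ln (f (x + s)) - ln (f x) - s * (D (x + s) + D x) / 2) has_real_derivative (D (x + s) - D x - s * D1 (x + s)) / 2) (at s)"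
        by (rule DERIV_cong[OF DERIV_diff[OF DERIV_diff[OF sphi DERIV_const] DERIV_cdivide[OF DERIV_mult[OF DERIV_ident DERIV_add[OF sD DERIV_const]]]]]) (simp add: field_simps)
      have st: "\<bar>s\<bar> \<le> \<bar>t\<bar>" using seg_abs[OF \<open>s \<in> _\<close>] by simp
      then have "\<bar>D (x + s) - D x - s * D1 (x + s)\<bar> \<le> M1 * s^2" using clS that by auto
      also have "\<dots> \<le> M1 * t^2" using st M1(1) by (intro mult_left_mono) (auto simp: abs_le_square_iff)
      finally show "\<bar>(D (x + s) - D x - s * D1 (x + s)) / 2\<bar> \<le> M1 * t^2 / 2" by simp
    qed
    then show ?thesis by (simp add: power2_eq_square power3_eq_cube abs_mult)
  qed
  have clD: "\<bar>D (x + t) - D x\<bar> \<le> M2 * \<bar>t\<bar>" if "\<bar>t\<bar> \<le> 1" for t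
  proof -
    have "\<bar>D (x + t) - D (x + 0)\<bar> \<le> M2 * \<bar>t - 0\<bar>"
    proof (rule mvt_bound[where F="\<lambda>s. D (x + s)" and F'="\<lambda>s. D1 (x + s)"])
      fix s assume "s \<in> closed_segment 0 t"
      show "((\<lambda>s. D (x + s)) has_real_derivative D1 (x + s)) (at s)" by (rule sD)
      have "\<bar>s\<bar> \<le> \<bar>t\<bar>" using seg_abs[OF \<open>s \<in> _\<close>] by simp
      then show "\<bar>D1 (x + s)\<bar> \<le> M2" using M2 inI that by auto
    qed
    then show ?thesis by simp
  qed
  have clK1: "\<bar>H1 y - 1/2\<bar> \<le> M4 * \<bar>y\<bar>" if "\<bar>y\<bar> \<le> 1" for y
  proof -
    have "\<bar>H1 y - H1 0\<bar> \<le> M4 * \<bar>y - 0\<bar>"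
    proof (rule mvt_bound[where F="H1" and F'="H2"])
      fix s assume "s \<in> closed_segment 0 y"
      show "(H1 has_real_derivative H2 s) (at s)" by (rule dH1)
      have "\<bar>s\<bar> \<le> \<bar>y\<bar>" using seg_abs[OF \<open>s \<in> _\<close>] by simp
      then have "s \<in> {-1..1}" using that by auto
      then show "\<bar>H2 s\<bar> \<le> M4" using M4(2) by blast
    qed
    then show ?thesis using H10 by simp
  qed
  have clK: "\<bar>(h a - a/2) - (h b - b/2)\<bar> \<le> M4 * r * \<bar>a - b\<bar>" if "\<bar>a\<bar> \<le> r" "\<bar>b\<bar> \<le> r" "r \<le> 1" for a b r
  proof (rule mvt_bound[where F="\<lambda>s. h s - s/2" and F'="\<lambda>s. H1 s - 1/2"])
    fix s assume "s \<in> closed_segment b a"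
    show "((\<lambda>s. h s - s/2) has_real_derivative H1 s - 1/2) (at s)"
      by (auto intro!: derivative_eq_intros dh)
    have "\<bar>s\<bar> \<le> r" using seg_abs[OF \<open>s \<in> _\<close>] that by simp
    then show "\<bar>H1 s - 1/2\<bar> \<le> M4 * r" using clK1[of s] that M4(1)
      by (meson dual_order.trans mult_left_mono)
  qed
  define E where "E \<sigma> = ln ((f (x + \<sigma> * u) / f x) *
              (g (exp (- deriv (\<lambda>y. ln (f y)) (x + \<sigma> * u) * \<sigma> * u))
               / g (exp (deriv (\<lambda>y. ln (f y)) x * \<sigma> * u))))" for \<sigma>
  have Eid: "E \<sigma> = (ln (f (x + t)) - ln (f x) - t * (D (x + t) + D x) / 2)
     + ((h (D (x + t) * t) - D (x + t) * t / 2) - (h (D x * t) - D x * t / 2))" if "t = \<sigma> * u" for \<sigma> t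
  proof -
    define a where "a = D (x + t) * t"
    define b where "b = D x * t"
    have e1: "- deriv (\<lambda>y. ln (f y)) (x + \<sigma> * u) * \<sigma> * u = - a"
      unfolding a_def Deq that by simp
    have e2: "deriv (\<lambda>y. ln (f y)) x * \<sigma> * u = b"
      unfolding b_def Deq that by simp
    have "g (exp (- a)) = exp (- a) * g (1 / exp (- a))" using g_sym exp_gt_zero[of "-a"] by blast
    moreover have "1 / exp (- a) = exp a" by (simp add: exp_minus divide_inverse)
    ultimately have ga: "g (exp (- a)) = exp (- a) * g (exp a)" by simp
    have "E \<sigma> = ln (f (x + t)) - ln (f x) + (ln (g (exp (- a)))) - h b"
    proof -
      have p: "f (x + \<sigma> * u) > 0" "f x > 0" "g (exp (- a)) > 0" "g (exp b) > 0"
        using f_pos g_pos by auto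
      show ?thesis unfolding E_def e1 e2 h_def using p that
        by (simp add: ln_mult ln_div)
    qed
    also have "\<dots> = ln (f (x + t)) - ln (f x) + (- a + h a) - h b"
      unfolding ga h_def using g_pos[rule_format, of "exp a"] by (simp add: ln_mult)
    finally show ?thesis unfolding a_def b_def
      by (simp add: field_simps)
  qed
  define C where "C = M1 / 2 + M4 * M3 * M2"
  have Ebd: "\<bar>E \<sigma>\<bar> \<le> C * \<bar>t\<bar>^3" if t: "t = \<sigma> * u" and tb: "\<bar>t\<bar> \<le> 1 / (M3 + 1)" for \<sigma> t
  proof -
    have t1: "\<bar>t\<bar> \<le> 1" using tb M3(1) by (smt (verit) divide_le_eq_1)
    have r1: "M3 * \<bar>t\<bar> \<le> 1"
    proof -
      have "M3 * \<bar>t\<bar> \<le> M3 * (1 / (M3 + 1))" using tb M3(1) using mult_left_mono[of "\<bar>t\<bar>" "1 / (M3 + 1)" M3] by simp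
      also have "\<dots> \<le> 1" using M3(1) by (simp add: field_simps)
      finally show ?thesis .
    qed
    have a1: "\<bar>D (x + t) * t\<bar> \<le> M3 * \<bar>t\<bar>" using M3 inI[OF t1] by (simp add: abs_mult mult_right_mono)
    have b1: "\<bar>D x * t\<bar> \<le> M3 * \<bar>t\<bar>" using M3 inI[of 0] by (simp add: abs_mult mult_right_mono)
    have k: "\<bar>(h (D (x + t) * t) - D (x + t) * t / 2) - (h (D x * t) - D x * t / 2)\<bar>
        \<le> M4 * (M3 * \<bar>t\<bar>) * \<bar>D (x + t) * t - D x * t\<bar>"
      by (rule clK[OF a1 b1 r1])
    have "\<bar>D (x + t) * t - D x * t\<bar> = \<bar>D (x + t) - D x\<bar> * \<bar>t\<bar>" by (simp add: abs_mult left_diff_distrib[symmetric])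
    also have "\<dots> \<le> M2 * \<bar>t\<bar> * \<bar>t\<bar>" using clD[OF t1] by (simp add: mult_right_mono)
    finally have ab: "\<bar>D (x + t) * t - D x * t\<bar> \<le> M2 * \<bar>t\<bar> * \<bar>t\<bar>" .
    have "M4 * (M3 * \<bar>t\<bar>) * \<bar>D (x + t) * t - D x * t\<bar> \<le> M4 * (M3 * \<bar>t\<bar>) * (M2 * \<bar>t\<bar> * \<bar>t\<bar>)"
      using ab M3(1) M4(1) by (intro mult_left_mono) auto
    also have "\<dots> = M4 * M3 * M2 * \<bar>t\<bar>^3" by (simp add: power3_eq_cube)
    finally have k2: "\<bar>(h (D (x + t) * t) - D (x + t) * t / 2) - (h (D x * t) - D x * t / 2)\<bar> \<le> M4 * M3 * M2 * \<bar>t\<bar>^3"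
      using k by linarith
    have tri: "\<bar>E \<sigma>\<bar> \<le> \<bar>ln (f (x + t)) - ln (f x) - t * (D (x + t) + D x) / 2\<bar>
      + \<bar>(h (D (x + t) * t) - D (x + t) * t / 2) - (h (D x * t) - D x * t / 2)\<bar>"
      unfolding Eid[OF t] by (rule abs_triangle_ineq)
    have Ce: "C * \<bar>t\<bar>^3 = M1 / 2 * \<bar>t\<bar>^3 + M4 * M3 * M2 * \<bar>t\<bar>^3" by (simp add: C_def algebra_simps)
    show ?thesis using tri Ce clT[OF t1] k2 by linarith
  qed
  have ev: "\<exists>d>0. \<forall>\<sigma>. \<sigma> \<noteq> 0 \<and> dist \<sigma> 0 < d \<longrightarrow> norm (E \<sigma>) \<le> (C * \<bar>u\<bar>^3) * norm (\<sigma>^3)"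
  proof (intro exI[of _ "1 / ((M3 + 1) * (\<bar>u\<bar> + 1))"] conjI allI impI)
    show "0 < 1 / ((M3 + 1) * (\<bar>u\<bar> + 1))" using M3(1) by (simp add: add_pos_nonneg)
    fix \<sigma> :: real assume "\<sigma> \<noteq> 0 \<and> dist \<sigma> 0 < 1 / ((M3 + 1) * (\<bar>u\<bar> + 1))"
    then have s: "\<bar>\<sigma>\<bar> * ((M3 + 1) * (\<bar>u\<bar> + 1)) \<le> 1" using M3(1)
      by (simp add: field_simps add_pos_nonneg)
    have "\<bar>\<sigma> * u\<bar> * (M3 + 1) \<le> \<bar>\<sigma>\<bar> * ((M3 + 1) * (\<bar>u\<bar> + 1))" using M3(1)
      by (simp add: abs_mult algebra_simps add_nonneg_nonneg mult_nonneg_nonneg)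
    then have "\<bar>\<sigma> * u\<bar> \<le> 1 / (M3 + 1)" using s M3(1) by (simp add: field_simps)
    from Ebd[OF refl this] show "norm (E \<sigma>) \<le> (C * \<bar>u\<bar>^3) * norm (\<sigma>^3)"
      by (simp add: abs_mult power_mult_distrib power_abs algebra_simps)
  qed
  have "eventually (\<lambda>\<sigma>. norm (E \<sigma>) \<le> (C * \<bar>u\<bar>^3) * norm (\<sigma>^3)) (at 0)"
    unfolding eventually_at using ev by simp
  then have "E \<in> O[at 0](\<lambda>\<sigma>. \<sigma> ^ 3)" by (rule bigoI)
  then show ?thesis unfolding E_def .
qed


theorem lemma12:
  fixes g f \<mu> :: "real \<Rightarrow> real"
  assumes g_C3: "C3_on_pos g"
    and g_pos: "\<forall>t>0. g t > 0"
    and g_sym: "\<forall>t>0. g t = t * g (1 / t)"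
    and mu_dens: "prob_density \<mu>"
    and mu_sym: "\<forall>w. \<mu> (- w) = \<mu> w"
    and mu_int: "\<forall>s>0. \<forall>j\<le>3. integrable lborel (\<lambda>w. (deriv ^^ j) g (exp (s * w)) * \<mu> w)"
    and f_smooth: "smooth_real f"
    and f_pos: "\<forall>x. f x > 0"
    and f_dens: "prob_density f"
  shows "\<forall>x u. (\<lambda>\<sigma>. ln ((f (x + \<sigma> * u) / f x) *
              (g (exp (- deriv (\<lambda>y. ln (f y)) (x + \<sigma> * u) * \<sigma> * u))
               / g (exp (deriv (\<lambda>y. ln (f y)) x * \<sigma> * u)))))
            \<in> O[at 0](\<lambda>\<sigma>. \<sigma> ^ 3)"
  using main[OF g_C3 g_pos g_sym f_smooth f_pos] by blast

end
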